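(* Let $G(V,E)$ be a graph with nonnegative edge weights $w$, let $\pi$ be a permutation of $E$ in non-increasing order of weight, and let $G^{(1)},\ldots,G^{(k)}$ be subgraphs of $G$ on vertex set $V$ (e.g. an outcome of a random $k$-clustering). For $i\in[k]$ let $M_i:=\mathsf{Greedy}(G^{(i)},\pi)$ and let $H$ be the graph on $V$ with edge set $\bigcup_{i} M_i$. Fix a maximum weight matching $M^*$ of $G$. Call $e\in M^*$ free for machine $1$ if no endpoint of $e$ is matched by $\mathsf{Greedy}(G^{(1)},\pi^{<e})$, and blocked otherwise; let $F_1$ and $B_1$ be the sets of free and blocked edges of $M^*$ for machine $1$, and let $F'_1:=F_1\cap E(H)$. Then $$\mathrm{opt}(H) \geq \frac12\left(w(F'_1)+w(B_1)\right).$$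
   Context: $\mathrm{opt}(H)$ is the weight of a maximum weight matching of $H$; $w(S)$ is the total weight of an edge set $S$. $\mathsf{Greedy}(G,\pi)$ scans the edges of $G$ in the order $\pi$ (restricted to the edges of $G$) and adds an edge $(u,v)$ iff neither endpoint is already matched. $\pi^{<e}$ is the set of edges preceding $e$ in $\pi$, and $\mathsf{Greedy}(G^{(1)},\pi^{<e})$ means running $\mathsf{Greedy}(G^{(1)},\pi)$ and stopping just before processing $e$. Whether $e$ is free or blocked does not depend on whether $e$ belongs to $G^{(1)}$. *)

theory Defs
  imports Complex_Main
begin

definition is_graph :: "'v set \<Rightarrow> 'v set set \<Rightarrow> bool" where
  "is_graph V E \<longleftrightarrow> finite V \<and> (\<forall>e\<in>E. card e = 2 \<and> e \<subseteq> V)"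

definition matching :: "'v set set \<Rightarrow> bool" where
  "matching M \<longleftrightarrow> (\<forall>e1\<in>M. \<forall>e2\<in>M. e1 \<noteq> e2 \<longrightarrow> e1 \<inter> e2 = {})"

definition opt :: "('v set \<Rightarrow> real) \<Rightarrow> 'v set set \<Rightarrow> real" where
  "opt w EH = Max ((\<lambda>M. sum w M) ` {M. M \<subseteq> EH \<and> matching M})"

definition max_weight_matching :: "('v set \<Rightarrow> real) \<Rightarrow> 'v set set \<Rightarrow> 'v set set \<Rightarrow> bool" where
  "max_weight_matching w E M \<longleftrightarrow> M \<subseteq> E \<and> matching M \<and>
     (\<forall>M'. M' \<subseteq> E \<and> matching M' \<longrightarrow> sum w M' \<le> sum w M)"

fun greedy_aux :: "'v set set \<Rightarrow> 'v set list \<Rightarrow> 'v set set \<Rightarrow> 'v set set" where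
  "greedy_aux Ei [] M = M"
| "greedy_aux Ei (e # es) M =
     (if e \<in> Ei \<and> (\<forall>u\<in>e. u \<notin> \<Union>M) then greedy_aux Ei es (insert e M)
      else greedy_aux Ei es M)"

definition greedy :: "'v set set \<Rightarrow> 'v set list \<Rightarrow> 'v set set" where
  "greedy Ei \<pi> = greedy_aux Ei \<pi> {}"

definition prefix_before :: "'v set list \<Rightarrow> 'v set \<Rightarrow> 'v set list" where
  "prefix_before \<pi> e = takeWhile (\<lambda>x. x \<noteq> e) \<pi>"

end

theory Submission
  imports Defs
begin

lemma greedy_aux_mono: "M \<subseteq> greedy_aux Ei xs M"
proof (induction xs arbitrary: M)
  case Nil then show ?case by simp
next
  case (Cons a xs)
  have "M \<subseteq> greedy_aux Ei xs (insert a M)" using Cons.IH[of "insert a M"] by blast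
  then show ?case using Cons.IH[of M] by simp
qed

lemma greedy_aux_append: "greedy_aux Ei (xs @ ys) M = greedy_aux Ei ys (greedy_aux Ei xs M)"
  by (induction xs arbitrary: M) auto

lemma greedy_aux_sub: "greedy_aux Ei xs M \<subseteq> M \<union> (Ei \<inter> set xs)"
proof (induction xs arbitrary: M)
  case Nil then show ?case by simp
next
  case (Cons a xs)
  show ?case using Cons[of "insert a M"] Cons[of M] by auto
qed

lemma greedy_aux_matching: "matching M \<Longrightarrow> matching (greedy_aux Ei xs M)"
proof (induction xs arbitrary: M)
  case Nil then show ?case by simp
next
  case (Cons a xs)
  have "matching (insert a M)" if "\<forall>u\<in>a. u \<notin> \<Union>M"
    using Cons.prems that unfolding matching_def by blast
  then show ?case using Cons by auto
qed

lemma sorted_prefix: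
  assumes "sorted_wrt R xs" "x \<in> set (takeWhile (\<lambda>y. y \<noteq> e) xs)" "e \<in> set xs"
  shows "R x e"
proof -
  have xs: "xs = takeWhile (\<lambda>y. y \<noteq> e) xs @ dropWhile (\<lambda>y. y \<noteq> e) xs" by simp
  have "e \<notin> set (takeWhile (\<lambda>y. y \<noteq> e) xs)"
    by (auto dest: set_takeWhileD)
  then have "e \<in> set (dropWhile (\<lambda>y. y \<noteq> e) xs)" using assms(3) xs
    by (metis Un_iff set_append)
  then show ?thesis using assms(1,2) xs sorted_wrt_append by metis
qed

lemma card_touch:
  assumes "matching M" "finite M" "card f = 2"
  shows "card {e\<in>M. e \<inter> f \<noteq> {}} \<le> 2"
proof -
  let ?S = "{e\<in>M. e \<inter> f \<noteq> {}}"
  define h where "h e = (SOME u. u \<in> e \<inter> f)" for e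
  have h: "h e \<in> e \<inter> f" if "e \<in> ?S" for e
  proof -
    have "\<exists>u. u \<in> e \<inter> f" using that by blast
    then show ?thesis unfolding h_def by (rule someI_ex)
  qed
  have "inj_on h ?S"
  proof (rule inj_onI)
    fix x y assume x: "x \<in> ?S" and y: "y \<in> ?S" and xy: "h x = h y"
    have "h x \<in> x \<inter> y" using h[OF x] h[OF y] xy by simp
    then have "x \<inter> y \<noteq> {}" by blast
    moreover have "x \<in> M" "y \<in> M" using x y by auto
    ultimately show "x = y" using assms(1) unfolding matching_def by blast
  qed
  moreover have "h ` ?S \<subseteq> f" using h by blast
  moreover have "finite f" using assms(3) by (metis card.infinite zero_neq_numeral)
  ultimately have "card ?S \<le> card f" by (meson card_inj_on_le)
  then show ?thesis using assms(3) by simp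
qed

theorem lemma3p3:
  fixes V :: "'v set" and E :: "'v set set" and w :: "'v set \<Rightarrow> real"
    and \<pi> :: "'v set list" and k :: nat and Gs :: "nat \<Rightarrow> 'v set set"
    and Mstar :: "'v set set"
  assumes graph: "is_graph V E"
    and nonneg: "\<forall>e\<in>E. w e \<ge> 0"
    and perm: "distinct \<pi>" "set \<pi> = E"
    and sorted: "sorted_wrt (\<lambda>a b. w a \<ge> w b) \<pi>"
    and k: "k \<ge> 1"
    and sub: "\<forall>i\<in>{1..k}. Gs i \<subseteq> E"
    and opt_M: "max_weight_matching w E Mstar"
  shows "let EH = (\<Union>i\<in>{1..k}. greedy (Gs i) \<pi>);
             F1 = {e\<in>Mstar. e \<inter> \<Union>(greedy (Gs 1) (prefix_before \<pi> e)) = {}};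
             B1 = Mstar - F1
         in opt w EH \<ge> (sum w (F1 \<inter> EH) + sum w B1) / 2"
proof -
  define EH where "EH = (\<Union>i\<in>{1..k}. greedy (Gs i) \<pi>)"
  define F1 where "F1 = {e\<in>Mstar. e \<inter> \<Union>(greedy (Gs 1) (prefix_before \<pi> e)) = {}}"
  define B1 where "B1 = Mstar - F1"
  define M1 where "M1 = greedy (Gs 1) \<pi>"
  define M1' where "M1' = {f\<in>M1. \<forall>e\<in>F1 \<inter> EH. f \<inter> e = {}}"
  have finE: "finite E"
  proof -
    have "E \<subseteq> Pow V" using graph unfolding is_graph_def by blast
    then show ?thesis using graph unfolding is_graph_def by (meson finite_Pow_iff finite_subset)
  qed
  have cardE: "\<And>e. e \<in> E \<Longrightarrow> card e = 2" using graph unfolding is_graph_def by blast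
  have Ms: "Mstar \<subseteq> E" "matching Mstar" using opt_M unfolding max_weight_matching_def by auto
  have gsub: "\<And>i. greedy (Gs i) \<pi> \<subseteq> Gs i" using greedy_aux_sub unfolding greedy_def by fastforce
  have M1E: "M1 \<subseteq> E" using gsub sub k unfolding M1_def by fastforce
  have M1m: "matching M1" unfolding M1_def greedy_def
    by (rule greedy_aux_matching) (simp add: matching_def)
  have M1H: "M1 \<subseteq> EH" unfolding M1_def EH_def using k by auto
  have EHE: "EH \<subseteq> E" unfolding EH_def using gsub sub by fastforce
  have finEH: "finite EH" using EHE finE finite_subset by blast
  have opt_ge: "sum w N \<le> opt w EH" if "N \<subseteq> EH" "matching N" for N
  proof -
    have "finite {M. M \<subseteq> EH \<and> matching M}"
      using finEH by (metis (no_types, lifting) Collect_mono_iff Pow_def finite_Collect_subsets finite_subset)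
    then have fi: "finite ((\<lambda>M. sum w M) ` {M. M \<subseteq> EH \<and> matching M})" by blast
    have "sum w N \<in> (\<lambda>M. sum w M) ` {M. M \<subseteq> EH \<and> matching M}" using that by blast
    then show ?thesis unfolding opt_def using Max_ge[OF fi] by blast
  qed
  have A: "sum w M1 \<le> opt w EH" using opt_ge M1H M1m by blast
  have B: "sum w (F1 \<inter> EH) + sum w M1' \<le> opt w EH"
  proof -
    have disj: "(F1 \<inter> EH) \<inter> M1' = {}"
    proof (rule ccontr)
      assume "(F1 \<inter> EH) \<inter> M1' \<noteq> {}"
      then obtain f where f: "f \<in> F1 \<inter> EH" "f \<in> M1'" by blast
      then have "f \<inter> f = {}" unfolding M1'_def by blast
      moreover have "card f = 2" using f M1E cardE unfolding M1'_def by blast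
      ultimately show False by auto
    qed
    have fin: "finite (F1 \<inter> EH)" "finite M1'" using finEH M1H unfolding M1'_def
      by (auto intro: finite_subset)
    have F1M: "F1 \<subseteq> Mstar" unfolding F1_def by blast
    have M1'M: "M1' \<subseteq> M1" unfolding M1'_def by blast
    have "matching (F1 \<inter> EH \<union> M1')" unfolding matching_def
    proof (intro ballI impI)
      fix a b assume a: "a \<in> F1 \<inter> EH \<union> M1'" and b: "b \<in> F1 \<inter> EH \<union> M1'" and ab: "a \<noteq> b"
      consider "a \<in> F1 \<inter> EH" "b \<in> F1 \<inter> EH" | "a \<in> M1'" "b \<in> M1'"
        | "a \<in> F1 \<inter> EH" "b \<in> M1'" | "a \<in> M1'" "b \<in> F1 \<inter> EH" using a b by blast
      then show "a \<inter> b = {}"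
      proof cases
        case 1 then show ?thesis using Ms(2) F1M ab unfolding matching_def by blast
      next
        case 2 then show ?thesis using M1m M1'M ab unfolding matching_def by blast
      next
        case 3 then have "b \<inter> a = {}" unfolding M1'_def by blast
        then show ?thesis by blast
      next
        case 4 then show ?thesis unfolding M1'_def by blast
      qed
    qed
    moreover have "F1 \<inter> EH \<union> M1' \<subseteq> EH" using M1H unfolding M1'_def by blast
    ultimately have "sum w (F1 \<inter> EH \<union> M1') \<le> opt w EH" using opt_ge by blast
    then show ?thesis using sum.union_disjoint[OF fin disj, of w] by linarith
  qed
  have C: "sum w B1 \<le> sum w M1 + sum w M1'"
  proof -
    have blk: "\<exists>f. f \<in> M1 \<and> f \<inter> e \<noteq> {} \<and> w e \<le> w f \<and> f \<noteq> e" if e: "e \<in> B1" for e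
    proof -
      let ?p = "prefix_before \<pi> e"
      have eM: "e \<in> Mstar" using e unfolding B1_def by blast
      have "e \<inter> \<Union>(greedy (Gs 1) ?p) \<noteq> {}" using e unfolding B1_def F1_def by blast
      then obtain f where f: "f \<in> greedy (Gs 1) ?p" "f \<inter> e \<noteq> {}" by blast
      have fp: "f \<in> set ?p" using f(1) greedy_aux_sub unfolding greedy_def by fastforce
      have "\<pi> = ?p @ dropWhile (\<lambda>x. x \<noteq> e) \<pi>" unfolding prefix_before_def by simp
      then have "greedy (Gs 1) \<pi> = greedy_aux (Gs 1) (dropWhile (\<lambda>x. x \<noteq> e) \<pi>) (greedy (Gs 1) ?p)"
        unfolding greedy_def by (metis greedy_aux_append)
      then have "f \<in> M1" using f(1) greedy_aux_mono unfolding M1_def by blast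
      moreover have "w e \<le> w f"
        using sorted_prefix[OF sorted, of f e] fp eM Ms perm unfolding prefix_before_def by auto
      moreover have "f \<noteq> e" using fp unfolding prefix_before_def by (auto dest: set_takeWhileD)
      ultimately show ?thesis using f by blast
    qed
    have "\<forall>e\<in>B1. \<exists>f. f \<in> M1 \<and> f \<inter> e \<noteq> {} \<and> w e \<le> w f \<and> f \<noteq> e"
      using blk by blast
    from bchoice[OF this] obtain g where g0: "\<forall>e\<in>B1. g e \<in> M1 \<and> g e \<inter> e \<noteq> {} \<and> w e \<le> w (g e) \<and> g e \<noteq> e"
      by blast
    have g: "\<And>e. e \<in> B1 \<Longrightarrow> g e \<in> M1 \<and> g e \<inter> e \<noteq> {} \<and> w e \<le> w (g e) \<and> g e \<noteq> e"
      using g0 by blast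
    have finB1: "finite B1" using Ms finE unfolding B1_def by (auto intro: finite_subset)
    have finM1: "finite M1" using M1E finE finite_subset by blast
    have wnn: "\<And>f. f \<in> M1 \<Longrightarrow> w f \<ge> 0" using nonneg M1E by blast
    have fib: "card {e\<in>B1. g e = f} \<le> (if f \<in> M1' then 2 else 1)" if fM: "f \<in> M1" for f
    proof -
      let ?S = "{e\<in>Mstar. e \<inter> f \<noteq> {}}"
      have finS: "finite ?S" using Ms finE by (auto intro: finite_subset)
      have S2: "card ?S \<le> 2" using card_touch[OF Ms(2) _ cardE] Ms finE fM M1E
        by (meson finite_subset subsetD)
      have sub1: "{e\<in>B1. g e = f} \<subseteq> ?S" using g unfolding B1_def by blast
      show ?thesis
      proof (cases "f \<in> M1'")
        case True
        then show ?thesis using S2 card_mono[OF finS sub1] by simp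
      next
        case False
        then obtain e' where e': "e' \<in> F1 \<inter> EH" "f \<inter> e' \<noteq> {}" unfolding M1'_def using fM by blast
        show ?thesis
        proof (cases "e' = f")
          case True
          have "{e\<in>B1. g e = f} = {}"
          proof (rule ccontr)
            assume "{e\<in>B1. g e = f} \<noteq> {}"
            then obtain e where "e \<in> B1" "g e = f" by blast
            moreover have "e \<in> Mstar" "f \<in> Mstar" using \<open>e \<in> B1\<close> e' True unfolding B1_def F1_def by auto
            moreover have "f \<noteq> e" "f \<inter> e \<noteq> {}" using g[OF \<open>e \<in> B1\<close>] \<open>g e = f\<close> by auto
            ultimately show False using Ms(2) unfolding matching_def by blast
          qed
          then show ?thesis by (simp only: card.empty)
        next
          case False
          have "e' \<in> ?S" using e' unfolding F1_def by blast
          have "{e\<in>B1. g e = f} \<subseteq> ?S - {e'}" using sub1 e' unfolding B1_def by blast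
          then have "card {e\<in>B1. g e = f} \<le> card (?S - {e'})"
            using finS by (meson card_mono finite_Diff)
          also have "\<dots> = card ?S - 1" using \<open>e' \<in> ?S\<close> by simp
          finally show ?thesis using S2 \<open>f \<notin> M1'\<close> by simp
        qed
      qed
    qed
    have "sum w B1 \<le> sum (\<lambda>e. w (g e)) B1" using g by (simp add: sum_mono)
    also have "\<dots> = sum (\<lambda>f. sum (\<lambda>e. w (g e)) {e\<in>B1. g e = f}) (g ` B1)"
      by (rule sum.image_gen[OF finB1])
    also have "\<dots> = sum (\<lambda>f. w f * card {e\<in>B1. g e = f}) (g ` B1)"
    proof (rule sum.cong)
      fix f assume "f \<in> g ` B1"
      have "sum (\<lambda>e. w (g e)) {e\<in>B1. g e = f} = sum (\<lambda>e. w f) {e\<in>B1. g e = f}"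
        by (rule sum.cong) auto
      then show "sum (\<lambda>e. w (g e)) {e\<in>B1. g e = f} = w f * card {e\<in>B1. g e = f}" by simp
    qed simp
    also have "\<dots> \<le> sum (\<lambda>f. w f * card {e\<in>B1. g e = f}) M1"
    proof (rule sum_mono2[OF finM1])
      show "g ` B1 \<subseteq> M1" using g by blast
      fix b assume "b \<in> M1 - g ` B1"
      then show "0 \<le> w b * real (card {e \<in> B1. g e = b})" using wnn by simp
    qed
    also have "\<dots> \<le> sum (\<lambda>f. w f + (if f \<in> M1' then w f else 0)) M1"
    proof (rule sum_mono)
      fix f assume fM: "f \<in> M1"
      have "real (card {e\<in>B1. g e = f}) \<le> (if f \<in> M1' then 2 else 1)" using fib[OF fM]
        by (auto split: if_splits)
      then have "w f * card {e\<in>B1. g e = f} \<le> w f * (if f \<in> M1' then 2 else 1)"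
        using wnn[OF fM] by (intro mult_left_mono) auto
      then show "w f * card {e\<in>B1. g e = f} \<le> w f + (if f \<in> M1' then w f else 0)"
        by (auto split: if_splits)
    qed
    also have "\<dots> = sum w M1 + sum (\<lambda>f. if f \<in> M1' then w f else 0) M1"
      by (simp add: sum.distrib)
    also have "sum (\<lambda>f. if f \<in> M1' then w f else 0) M1 = sum w (M1 \<inter> M1')"
      using sum.inter_restrict[OF finM1, of w M1'] by simp
    also have "M1 \<inter> M1' = M1'" unfolding M1'_def by blast
    finally show ?thesis .
  qed
  have "sum w (F1 \<inter> EH) + sum w B1 \<le> 2 * opt w EH" using A B C by linarith
  then have "(sum w (F1 \<inter> EH) + sum w B1) / 2 \<le> opt w EH" by simp
  then show ?thesis unfolding Let_def EH_def F1_def B1_def .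
qed

end
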